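(* Let $v_1\ge v_2\ge\cdots\ge v_n>0$, $1\ge q_1\ge\cdots\ge q_n\ge0$, and $a_1,\dots,a_n\ge0$ with $\sum_j a_j>0$. For $\sigma\in S_n$ let $f(\sigma)=\frac{\sum_i v_{\sigma_i}a_iq_i}{\sum_j v_{\sigma_j}a_j}$, and let $\lambda^q=f(\mathrm{id})=\frac{\sum_i v_ia_iq_i}{\sum_j v_ja_j}$ (the quality ranking). Then $$\max_{\sigma\in S_n} f(\sigma)\;\le\;\frac{v_1}{v_n}\,\lambda^q.$$ Moreover the factor $v_1/v_n$ is tight: for every $c\in(0,1)$ and every $\delta>0$ there exist appeals $a_1,a_2,a_3\ge0$ (not all zero) and qualities $1\ge q_1\ge q_2\ge q_3\ge0$ such that, with $n=3$ and visibilities $(v_1,v_2,v_3)=(1,1,c)$, one has $\max_\sigma f(\sigma)\ge(\frac{1}{c}-\delta)\lambda^q$.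
   Context: Static trial-offer market: a ranking $\sigma\in S_n$ places product $i$ in position $\sigma_i$, position $p$ has visibility $v_p$, product $i$ is tried with probability $\frac{v_{\sigma_i}a_i}{\sum_j v_{\sigma_j}a_j}$ and then purchased with probability $q_i$; $f(\sigma)$ is the expected number of purchases in one step. The quality ranking is the identity ranking $\sigma_i=i$. *)

theory Defs
  imports Complex_Main "HOL-Combinatorics.Permutations"
begin

text \<open>Products are indexed 1..n; positions 1..n. A ranking sigma is a permutation of
  {1..n}; product i is placed at position sigma i. v, a, q are visibilities, appeals, qualities.\<close>

definition purch :: "nat \<Rightarrow> (nat \<Rightarrow> real) \<Rightarrow> (nat \<Rightarrow> real) \<Rightarrow> (nat \<Rightarrow> real) \<Rightarrow> (nat \<Rightarrow> nat) \<Rightarrow> real" where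
  "purch n v a q \<sigma> = (\<Sum>i\<in>{1..n}. v (\<sigma> i) * a i * q i) / (\<Sum>j\<in>{1..n}. v (\<sigma> j) * a j)"

definition max_purch :: "nat \<Rightarrow> (nat \<Rightarrow> real) \<Rightarrow> (nat \<Rightarrow> real) \<Rightarrow> (nat \<Rightarrow> real) \<Rightarrow> real" where
  "max_purch n v a q = Max {purch n v a q \<sigma> | \<sigma>. \<sigma> permutes {1..n}}"

end

theory Submission
  imports Defs
begin

lemma fin_purch: "finite {purch n v a q \<sigma> | \<sigma>. \<sigma> permutes {1..n}}"
proof -
  have "{purch n v a q \<sigma> | \<sigma>. \<sigma> permutes {1..n}} = purch n v a q ` {\<sigma>. \<sigma> permutes {1..n}}" by auto
  thus ?thesis using finite_permutations[of "{1..n}"] by simp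
qed

lemma cheb:
  fixes w x y :: "nat \<Rightarrow> real"
  assumes w: "\<And>i. i \<in> S \<Longrightarrow> w i \<ge> 0"
    and sm: "\<And>i j. i \<in> S \<Longrightarrow> j \<in> S \<Longrightarrow> (x i - x j) * (y i - y j) \<ge> 0"
  shows "(\<Sum>i\<in>S. w i * x i) * (\<Sum>i\<in>S. w i * y i) \<le> (\<Sum>i\<in>S. w i * x i * y i) * (\<Sum>i\<in>S. w i)"
proof -
  define P where "P = (\<Sum>i\<in>S. w i * x i * y i) * (\<Sum>i\<in>S. w i)"
  define Q where "Q = (\<Sum>i\<in>S. w i * x i) * (\<Sum>i\<in>S. w i * y i)"
  have 0: "0 \<le> (\<Sum>i\<in>S. \<Sum>j\<in>S. w i * w j * ((x i - x j) * (y i - y j)))"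
    by (intro sum_nonneg) (simp add: w sm)
  have 1: "(\<Sum>i\<in>S. \<Sum>j\<in>S. w i * w j * ((x i - x j) * (y i - y j))) = (\<Sum>i\<in>S. \<Sum>j\<in>S. w i * x i * y i * w j) + (\<Sum>i\<in>S. \<Sum>j\<in>S. w j * x j * y j * w i)
        - (\<Sum>i\<in>S. \<Sum>j\<in>S. w i * x i * (w j * y j)) - (\<Sum>i\<in>S. \<Sum>j\<in>S. w j * x j * (w i * y i))"
    by (simp only: sum.distrib[symmetric] sum_subtractf[symmetric]) (intro sum.cong refl, simp add: algebra_simps)
  have 2: "(\<Sum>i\<in>S. \<Sum>j\<in>S. w j * x j * y j * w i) = (\<Sum>j\<in>S. \<Sum>i\<in>S. w j * x j * y j * w i)"
    by (rule sum.swap)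
  have 3: "(\<Sum>i\<in>S. \<Sum>j\<in>S. w j * x j * (w i * y i)) = (\<Sum>j\<in>S. \<Sum>i\<in>S. w j * x j * (w i * y i))"
    by (rule sum.swap)
  have 4: "(\<Sum>i\<in>S. \<Sum>j\<in>S. w i * x i * y i * w j) = P"
    unfolding P_def sum_distrib_right sum_distrib_left by (rule refl | rule sum.swap)
  have 5: "(\<Sum>j\<in>S. \<Sum>i\<in>S. w j * x j * y j * w i) = P"
    unfolding P_def sum_distrib_right sum_distrib_left by (rule refl | rule sum.swap)
  have 6: "(\<Sum>i\<in>S. \<Sum>j\<in>S. w i * x i * (w j * y j)) = Q"
    unfolding Q_def sum_distrib_right sum_distrib_left by (rule refl | rule sum.swap)
  have 7: "(\<Sum>j\<in>S. \<Sum>i\<in>S. w j * x j * (w i * y i)) = Q"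
    unfolding Q_def sum_distrib_right sum_distrib_left by (rule refl | rule sum.swap)
  have "0 \<le> P + P - Q - Q" using 0 1 2 3 4 5 6 7 by simp
  thus ?thesis unfolding P_def Q_def by (simp add: mult.commute)
qed

lemma tight_ineq: fixes c d e :: real assumes c: "0<c" "c<1" and d: "d>0" and e_def: "e = d * c^2 / (1 - c)"
 shows "(1 / c - d) * (e / (e + 1)) \<le> e / (e + c)"
proof -
  have e0: "e > 0" using c d by (simp add: e_def)
  have ke: "e * (1 - c) = d * c^2" using c by (simp add: e_def)
  have n: "e + c - d*c^2 = c*(e+1)" using ke by (simp add: algebra_simps)
  have "1/c - d*c/(e+c) = (e + c - d*c^2)/(c*(e+c))"
    using c e0 by (simp add: field_simps power2_eq_square)
  also have "\<dots> = (e+1)/(e+c)" unfolding n using c e0 by simp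
  finally have r: "(e+1)/(e+c) = 1/c - d*c/(e+c)" by simp
  have "d*c/(e+c) \<le> d" using c e0 d by (simp add: divide_simps)
  hence "1/c - d \<le> (e+1)/(e+c)" using r by simp
  hence "(1 / c - d) * (e / (e + 1)) \<le> (e+1)/(e+c) * (e / (e + 1))"
    using e0 by (intro mult_right_mono) auto
  also have "\<dots> = e/(e+c)" using e0 c by (simp add: divide_simps)
  finally show ?thesis .
qed

theorem mainTheorem10:
  fixes n :: nat and v a q :: "nat \<Rightarrow> real"
  assumes v_mono: "\<And>i j. 1 \<le> i \<Longrightarrow> i \<le> j \<Longrightarrow> j \<le> n \<Longrightarrow> v j \<le> v i"
    and v_pos: "v n > 0"
    and q_mono: "\<And>i j. 1 \<le> i \<Longrightarrow> i \<le> j \<Longrightarrow> j \<le> n \<Longrightarrow> q j \<le> q i"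
    and q_le1: "q 1 \<le> 1" and q_nonneg: "q n \<ge> 0"
    and a_nonneg: "\<And>i. 1 \<le> i \<Longrightarrow> i \<le> n \<Longrightarrow> a i \<ge> 0"
    and a_sum: "(\<Sum>j\<in>{1..n}. a j) > 0"
  shows "max_purch n v a q \<le> v 1 / v n * purch n v a q id
    \<and> (\<forall>c::real. 0 < c \<and> c < 1 \<longrightarrow> (\<forall>\<delta>::real. \<delta> > 0 \<longrightarrow>
         (\<exists>a' q' :: nat \<Rightarrow> real.
            (\<forall>i\<in>{1..3}. a' i \<ge> 0) \<and> (\<exists>i\<in>{1..3}. a' i \<noteq> 0) \<and>
            1 \<ge> q' 1 \<and> q' 1 \<ge> q' 2 \<and> q' 2 \<ge> q' 3 \<and> q' 3 \<ge> 0 \<and>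
            max_purch 3 (\<lambda>i. if i = 3 then c else 1) a' q'
              \<ge> (1 / c - \<delta>) * purch 3 (\<lambda>i. if i = 3 then c else 1) a' q' id)))"
proof (rule conjI)
  let ?S = "{1..n}"
  have n1: "n \<ge> 1" using a_sum by (cases n) auto
  have vb: "v n \<le> v i \<and> v i \<le> v 1" if "i \<in> ?S" for i
    using that v_mono[of i n] v_mono[of 1 i] by auto
  have qn: "q i \<ge> 0" if "i \<in> ?S" for i
    using that q_mono[of i n] q_nonneg by auto
  have an: "a i \<ge> 0" if "i \<in> ?S" for i using that a_nonneg by auto
  define A where "A = (\<Sum>j\<in>?S. a j)"
  define AQ where "AQ = (\<Sum>j\<in>?S. a j * q j)"
  have A0: "A > 0" using a_sum A_def by simp
  have AQ0: "AQ \<ge> 0" unfolding AQ_def by (intro sum_nonneg) (simp add: an qn)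
  have v1: "v 1 > 0" using vb[of 1] n1 v_pos by auto
  have DV: "(\<Sum>j\<in>?S. v j * a j) \<ge> v n * A"
    unfolding A_def sum_distrib_left by (intro sum_mono) (simp add: mult_right_mono vb an)
  have DVp: "(\<Sum>j\<in>?S. v j * a j) > 0" using DV A0 v_pos
    by (smt (verit) mult_pos_pos)
  have ch: "(\<Sum>i\<in>?S. a i * v i) * AQ \<le> (\<Sum>i\<in>?S. a i * v i * q i) * A"
    unfolding AQ_def A_def
  proof (rule cheb)
    fix i j assume ij: "i \<in> ?S" "j \<in> ?S"
    show "0 \<le> (v i - v j) * (q i - q j)"
    proof (cases "i \<le> j")
      case True
      then show ?thesis using ij v_mono[of i j] q_mono[of i j] by (auto intro: mult_nonneg_nonneg)
    next
      case False
      then show ?thesis using ij v_mono[of j i] q_mono[of j i]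
        by (auto intro: mult_nonpos_nonpos)
    qed
  qed (simp add: an)
  have lam: "purch n v a q id \<ge> AQ / A"
  proof -
    have "purch n v a q id = (\<Sum>i\<in>?S. a i * v i * q i) / (\<Sum>i\<in>?S. a i * v i)"
      unfolding purch_def by (simp add: mult.commute mult.left_commute)
    moreover have "(\<Sum>i\<in>?S. a i * v i) > 0" using DVp by (simp add: mult.commute)
    ultimately have e: "purch n v a q id * (\<Sum>i\<in>?S. a i * v i) = (\<Sum>i\<in>?S. a i * v i * q i)"
      and dp: "(\<Sum>i\<in>?S. a i * v i) > 0" by simp_all
    have "AQ * (\<Sum>i\<in>?S. a i * v i) = (\<Sum>i\<in>?S. a i * v i) * AQ" by (rule mult.commute)
    also have "\<dots> \<le> (\<Sum>i\<in>?S. a i * v i * q i) * A" by (rule ch)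
    also have "\<dots> = (A * purch n v a q id) * (\<Sum>i\<in>?S. a i * v i)"
      unfolding e[symmetric] by (simp only: mult.commute mult.left_commute)
    finally have "AQ * (\<Sum>i\<in>?S. a i * v i) \<le> (A * purch n v a q id) * (\<Sum>i\<in>?S. a i * v i)" .
    hence "AQ \<le> A * purch n v a q id" using dp by simp
    thus ?thesis using A0 by (simp add: divide_simps mult.commute)
  qed
  show "max_purch n v a q \<le> v 1 / v n * purch n v a q id"
    unfolding max_purch_def
  proof (subst Max_le_iff)
    show "finite {purch n v a q \<sigma> | \<sigma>. \<sigma> permutes {1..n}}" by (rule fin_purch)
    show "{purch n v a q \<sigma> | \<sigma>. \<sigma> permutes {1..n}} \<noteq> {}" using permutes_id by blast
    show "\<forall>x\<in>{purch n v a q \<sigma> | \<sigma>. \<sigma> permutes {1..n}}. x \<le> v 1 / v n * purch n v a q id"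
    proof safe
      fix \<sigma> assume p: "\<sigma> permutes ?S"
      have s: "\<sigma> i \<in> ?S" if "i \<in> ?S" for i using p that by (rule permutes_in_image[THEN iffD2])
      have N: "(\<Sum>i\<in>?S. v (\<sigma> i) * a i * q i) \<le> v 1 * AQ"
        unfolding AQ_def sum_distrib_left
      proof (intro sum_mono)
        fix i assume i: "i \<in> ?S"
        have "0 \<le> a i * q i" using an[OF i] qn[OF i] by simp
        hence "v (\<sigma> i) * (a i * q i) \<le> v 1 * (a i * q i)" using vb[OF s[OF i]] by (intro mult_right_mono) auto
        thus "v (\<sigma> i) * a i * q i \<le> v 1 * (a i * q i)" by (simp add: mult.assoc)
      qed
      have D: "(\<Sum>i\<in>?S. v (\<sigma> i) * a i) \<ge> v n * A"
        unfolding A_def sum_distrib_left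
      proof (intro sum_mono)
        fix i assume i: "i \<in> ?S"
        show "v n * a i \<le> v (\<sigma> i) * a i" using vb[OF s[OF i]] an[OF i] by (intro mult_right_mono) auto
      qed
      have Dp: "v n * A > 0" using v_pos A0 by simp
      have "purch n v a q \<sigma> \<le> v 1 * AQ / (v n * A)"
      proof -
        have "purch n v a q \<sigma> \<le> v 1 * AQ / (\<Sum>i\<in>?S. v (\<sigma> i) * a i)"
          unfolding purch_def using N D Dp by (intro divide_right_mono) auto
        also have "\<dots> \<le> v 1 * AQ / (v n * A)"
          using D Dp AQ0 v1 by (intro divide_left_mono) auto
        finally show ?thesis .
      qed
      also have "\<dots> = v 1 / v n * (AQ / A)" by simp
      also have "\<dots> \<le> v 1 / v n * purch n v a q id"
        using lam v1 v_pos by (intro mult_left_mono) auto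
      finally show "purch n v a q \<sigma> \<le> v 1 / v n * purch n v a q id" .
    qed
  qed
next
  show "\<forall>c::real. 0 < c \<and> c < 1 \<longrightarrow> (\<forall>\<delta>::real. \<delta> > 0 \<longrightarrow>
         (\<exists>a' q' :: nat \<Rightarrow> real.
            (\<forall>i\<in>{1..3}. a' i \<ge> 0) \<and> (\<exists>i\<in>{1..3}. a' i \<noteq> 0) \<and>
            1 \<ge> q' 1 \<and> q' 1 \<ge> q' 2 \<and> q' 2 \<ge> q' 3 \<and> q' 3 \<ge> 0 \<and>
            max_purch 3 (\<lambda>i. if i = 3 then c else 1) a' q'
              \<ge> (1 / c - \<delta>) * purch 3 (\<lambda>i. if i = 3 then c else 1) a' q' id))"
  proof (intro allI impI)
    fix c \<delta> :: real assume c: "0 < c \<and> c < 1" and d: "\<delta> > 0"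
    define e where "e = \<delta> * c^2 / (1 - c)"
    have e0: "e > 0" using c d by (simp add: e_def)
    define a' :: "nat \<Rightarrow> real" where "a' = (\<lambda>i. if i = 1 then e else if i = 2 then 1 else 0)"
    define q' :: "nat \<Rightarrow> real" where "q' = (\<lambda>i. if i = 1 then 1 else 0)"
    define V :: "nat \<Rightarrow> real" where "V = (\<lambda>i. if i = 3 then c else 1)"
    define \<sigma> :: "nat \<Rightarrow> nat" where "\<sigma> = Transposition.transpose 2 3"
    have p: "\<sigma> permutes {1..3}" unfolding \<sigma>_def by (rule permutes_swap_id) auto
    have S3: "{1..3::nat} = {1,2,3}" by auto
    have fs: "purch 3 V a' q' \<sigma> = e / (e + c)"
      unfolding purch_def S3 by (simp add: a'_def q'_def V_def \<sigma>_def transpose_def)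
    have fi: "purch 3 V a' q' id = e / (e + 1)"
      unfolding purch_def S3 by (simp add: a'_def q'_def V_def)
    have "max_purch 3 V a' q' \<ge> purch 3 V a' q' \<sigma>"
      unfolding max_purch_def by (rule Max_ge[OF fin_purch]) (use p in blast)
    moreover have "(1 / c - \<delta>) * (e / (e + 1)) \<le> e / (e + c)"
      using c d e_def by (intro tight_ineq) auto
    ultimately have "max_purch 3 V a' q' \<ge> (1 / c - \<delta>) * purch 3 V a' q' id"
      using fs fi by simp
    moreover have "(\<forall>i\<in>{1..3}. a' i \<ge> 0) \<and> (\<exists>i\<in>{1..3}. a' i \<noteq> 0)"
      using e0 by (auto simp: a'_def intro: bexI[of _ 2])
    ultimately show "\<exists>a' q' :: nat \<Rightarrow> real.
            (\<forall>i\<in>{1..3}. a' i \<ge> 0) \<and> (\<exists>i\<in>{1..3}. a' i \<noteq> 0) \<and>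
            1 \<ge> q' 1 \<and> q' 1 \<ge> q' 2 \<and> q' 2 \<ge> q' 3 \<and> q' 3 \<ge> 0 \<and>
            max_purch 3 (\<lambda>i. if i = 3 then c else 1) a' q'
              \<ge> (1 / c - \<delta>) * purch 3 (\<lambda>i. if i = 3 then c else 1) a' q' id"
      unfolding V_def by (intro exI[of _ a'] exI[of _ q']) (simp add: q'_def)
  qed
qed

end
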